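(* For an unweighted cycle $\mathcal{C}_N$ ($N\geq3$), one has $h(1)=0$, \[ \overline{h}(1)=\begin{cases}\frac{N-1}{N},& N\text{ odd},\\ 1,& N\text{ even},\end{cases} \qquad h(k)=1-\overline{h}(k)=\frac{1}{\lfloor N/k\rfloor}\quad\text{for }2\leq k\leq N. \]
   Context: The unweighted cycle $\mathcal{C}_N$ has vertices $v_1,\ldots,v_N$ and edges exactly $\{v_i,v_{i+1}\}$ (indices mod $N$), each of weight $1$; $w_{uv}=0$ for non-edges, so every degree $d_u=2$. $|E(A,B)|:=\sum_{u\in A,v\in B}w_{uv}$, $\mathrm{vol}(A)=\sum_{u\in A}d_u$, $\overline{A}$ the complement. For nonempty $S$, $\phi(S)=|E(S,\overline{S})|/\mathrm{vol}(S)$; $h(k):=\min\max_{1\leq i\leq k}\phi(S_i)$ over all collections of $k$ nonempty pairwise disjoint vertex subsets. For disjoint $V_1,V_2$ with $V_1\cup V_2\neq\emptyset$, $\overline{\phi}(V_1,V_2)=2|E(V_1,V_2)|/\mathrm{vol}(V_1\cup V_2)$; $\overline{h}(k):=\max\min_{1\leq i\leq k}\overline{\phi}(V_{2i-1},V_{2i})$ over all collections of $k$ pairs $(V_1,V_2),\ldots,(V_{2k-1},V_{2k})$ of pairwise disjoint vertex subsets with $V_{2i-1}\cup V_{2i}\neq\emptyset$ for each $i$. *)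

theory Defs
  imports Complex_Main
begin

text \<open>The unweighted cycle C_N with vertex set {0..<N} (vertex v_i is i-1);
  edges are {i, (i+1) mod N}, each of weight 1.\<close>

definition cyc_V :: "nat \<Rightarrow> nat set" where
  "cyc_V N = {..<N}"

definition cyc_w :: "nat \<Rightarrow> nat \<Rightarrow> nat \<Rightarrow> real" where
  "cyc_w N u v = (if u < N \<and> v < N \<and> u \<noteq> v \<and> (v = (u + 1) mod N \<or> u = (v + 1) mod N)
                  then 1 else 0)"

definition cyc_deg :: "nat \<Rightarrow> nat \<Rightarrow> real" where
  "cyc_deg N u = (\<Sum>v\<in>cyc_V N. cyc_w N u v)"

definition cyc_E :: "nat \<Rightarrow> nat set \<Rightarrow> nat set \<Rightarrow> real" where
  "cyc_E N A B = (\<Sum>u\<in>A. \<Sum>v\<in>B. cyc_w N u v)"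

definition cyc_vol :: "nat \<Rightarrow> nat set \<Rightarrow> real" where
  "cyc_vol N A = (\<Sum>u\<in>A. cyc_deg N u)"

definition cyc_phi :: "nat \<Rightarrow> nat set \<Rightarrow> real" where
  "cyc_phi N S = cyc_E N S (cyc_V N - S) / cyc_vol N S"

definition cyc_phibar :: "nat \<Rightarrow> nat set \<Rightarrow> nat set \<Rightarrow> real" where
  "cyc_phibar N A B = 2 * cyc_E N A B / cyc_vol N (A \<union> B)"

definition cyc_h :: "nat \<Rightarrow> nat \<Rightarrow> real" where
  "cyc_h N k = Inf {Max ((\<lambda>i. cyc_phi N (S i)) ` {..<k}) | S.
      (\<forall>i<k. S i \<noteq> {} \<and> S i \<subseteq> cyc_V N) \<and>
      (\<forall>i<k. \<forall>j<k. i \<noteq> j \<longrightarrow> S i \<inter> S j = {})}"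

definition cyc_hbar :: "nat \<Rightarrow> nat \<Rightarrow> real" where
  "cyc_hbar N k = Sup {Min ((\<lambda>i. cyc_phibar N (A i) (B i)) ` {..<k}) | A B.
      (\<forall>i<k. A i \<subseteq> cyc_V N \<and> B i \<subseteq> cyc_V N \<and> A i \<union> B i \<noteq> {} \<and> A i \<inter> B i = {}) \<and>
      (\<forall>i<k. \<forall>j<k. i \<noteq> j \<longrightarrow> (A i \<union> B i) \<inter> (A j \<union> B j) = {})}"

end

theory Submission
  imports Defs
begin

lemma sc_eq: "v < (N::nat) \<Longrightarrow> (v+1) mod N = (if v+1 = N then 0 else v+1)"
  by auto

lemma sc_eqS: "v < (N::nat) \<Longrightarrow> Suc v mod N = (if Suc v = N then 0 else Suc v)"
  by auto

lemma w_sym: "cyc_w N u v = cyc_w N v u"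
  unfolding cyc_w_def by auto

lemma w_nonneg: "cyc_w N u v \<ge> 0"
  unfolding cyc_w_def by auto

lemma E_sym: "cyc_E N A B = cyc_E N B A"
  unfolding cyc_E_def by (subst sum.swap) (simp add: w_sym)

lemma E_nonneg: "cyc_E N A B \<ge> 0"
  unfolding cyc_E_def by (intro sum_nonneg) (simp add: w_nonneg)

lemma w_sc: "N \<ge> 3 \<Longrightarrow> u < N \<Longrightarrow> cyc_w N u ((u+1) mod N) = 1 \<and> cyc_w N ((u+1) mod N) u = 1"
  unfolding cyc_w_def by (auto simp: sc_eqS)

lemma w_eq: assumes "N \<ge> 3" "u < N" "v < N"
  shows "cyc_w N u v = (if v \<in> {(u+1) mod N, if u = 0 then N - 1 else u - 1} then 1 else 0)"
proof -
  have i1: "(u = (v+1) mod N) \<longleftrightarrow> v = (if u = 0 then N - 1 else u - 1)"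
    using assms by (cases "Suc v = N") (auto simp: sc_eqS)
  have i2: "v = (u+1) mod N \<Longrightarrow> u \<noteq> v"
    using assms by (cases "Suc u = N") (auto simp: sc_eqS)
  have i3: "v = (if u = 0 then N - 1 else u - 1) \<Longrightarrow> u \<noteq> v"
    using assms by (cases "u = 0") auto
  have "(u < N \<and> v < N \<and> u \<noteq> v \<and> (v = (u + 1) mod N \<or> u = (v + 1) mod N))
     \<longleftrightarrow> v \<in> {(u+1) mod N, if u = 0 then N - 1 else u - 1}"
    using assms i1 i2 i3 by blast
  then show ?thesis unfolding cyc_w_def by presburger
qed

lemma sum_ind: "finite A \<Longrightarrow> (\<Sum>v\<in>A. if v \<in> X then 1 else 0) = real (card (A \<inter> X))"
  by (subst sum.If_cases) (simp_all add: Int_def)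

lemma deg: assumes "N \<ge> 3" "u < N" shows "cyc_deg N u = 2"
proof -
  define p where "p = (if u = 0 then N - 1 else u - 1)"
  have "cyc_deg N u = (\<Sum>v\<in>{..<N}. (if v \<in> {(u+1) mod N, p} then 1 else 0))"
    unfolding cyc_deg_def cyc_V_def p_def
    by (rule sum.cong[OF refl]) (rule w_eq[OF assms], simp)
  also have "\<dots> = real (card ({..<N} \<inter> {(u+1) mod N, p}))"
    by (rule sum_ind) simp
  also have "{..<N} \<inter> {(u+1) mod N, p} = {(u+1) mod N, p}"
    using assms unfolding p_def by auto
  also have "(u+1) mod N \<noteq> p"
  proof -
    have "u = 0 \<or> u = N - 1 \<or> (0 < u \<and> u + 1 < N)" using assms by linarith
    then show ?thesis using assms unfolding p_def by (elim disjE) (simp_all add: sc_eqS)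
  qed
  then have "card {(u+1) mod N, p} = 2" by simp
  finally show ?thesis by simp
qed

lemma vol: assumes "N \<ge> 3" "S \<subseteq> {..<N}" shows "cyc_vol N S = 2 * real (card S)"
proof -
  have "cyc_vol N S = (\<Sum>u\<in>S. 2)"
    unfolding cyc_vol_def using assms by (intro sum.cong) (auto simp: deg)
  then show ?thesis by simp
qed

lemma vol_E: "cyc_vol N X = cyc_E N X (cyc_V N)"
  unfolding cyc_vol_def cyc_E_def cyc_deg_def by simp

lemma E_Un_left: "A \<inter> B = {} \<Longrightarrow> finite A \<Longrightarrow> finite B \<Longrightarrow> cyc_E N (A \<union> B) C = cyc_E N A C + cyc_E N B C"
  unfolding cyc_E_def by (simp add: sum.union_disjoint)

lemma E_Un_right: "A \<inter> B = {} \<Longrightarrow> finite A \<Longrightarrow> finite B \<Longrightarrow> cyc_E N C (A \<union> B) = cyc_E N C A + cyc_E N C B"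
  unfolding cyc_E_def by (simp add: sum.union_disjoint sum.distrib)

lemma identity:
  assumes "A \<subseteq> {..<N}" "B \<subseteq> {..<N}" "A \<inter> B = {}"
  shows "cyc_vol N (A \<union> B) = cyc_E N A A + cyc_E N B B + 2 * cyc_E N A B
           + cyc_E N (A \<union> B) ({..<N} - (A \<union> B))"
proof -
  have fA: "finite A" and fB: "finite B" using assms(1,2) by (meson finite_lessThan finite_subset)+
  have V: "cyc_V N = (A \<union> B) \<union> ({..<N} - (A \<union> B))" using assms unfolding cyc_V_def by auto
  have "cyc_vol N (A \<union> B) = cyc_E N (A \<union> B) (A \<union> B) + cyc_E N (A \<union> B) ({..<N} - (A \<union> B))"
    unfolding vol_E V using fA fB by (subst E_Un_right) auto
  also have "cyc_E N (A \<union> B) (A \<union> B) = cyc_E N A A + cyc_E N B A + cyc_E N A B + cyc_E N B B"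
    using fA fB assms(3) by (simp add: E_Un_left E_Un_right)
  finally show ?thesis using E_sym[of N B A] by simp
qed

lemma E_cart: "finite X \<Longrightarrow> finite Y \<Longrightarrow> cyc_E N X Y = (\<Sum>p\<in>X \<times> Y. cyc_w N (fst p) (snd p))"
  unfolding cyc_E_def by (simp add: sum.cartesian_product case_prod_beta)

lemma pairs_core:
  assumes N: "N \<ge> 3" and fX: "finite X" and fY: "finite Y" and J: "J \<subseteq> {..<N}"
    and c: "\<forall>j\<in>J. (j \<in> X \<and> (j+1) mod N \<in> Y) \<or> (j \<in> Y \<and> (j+1) mod N \<in> X)"
  shows "2 * real (card J) \<le> (\<Sum>p\<in>X \<times> Y \<union> Y \<times> X. cyc_w N (fst p) (snd p))"
proof -
  let ?w = "\<lambda>p. cyc_w N (fst p) (snd p)"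
  define Q where "Q = (\<lambda>j. (j, (j+1) mod N)) ` J \<union> (\<lambda>j. ((j+1) mod N, j)) ` J"
  have fJ: "finite J" using J by (meson finite_lessThan finite_subset)
  have ssn: "(j+1) mod N \<noteq> j" if "j < N" for j
    using that N by (cases "Suc j = N") (auto simp: sc_eqS)
  have sss: "((j+1) mod N + 1) mod N \<noteq> j" if "j < N" for j
  proof -
    have "j = N - 1 \<or> j = N - 2 \<or> j + 2 < N" using that by linarith
    then show ?thesis using N that by (auto simp: sc_eqS)
  qed
  have disj: "(\<lambda>j. (j, (j+1) mod N)) ` J \<inter> (\<lambda>j. ((j+1) mod N, j)) ` J = {}"
    using J sss by auto
  have cQ: "card Q = 2 * card J"
    unfolding Q_def using fJ disj
    by (subst card_Un_disjoint) (auto simp: card_image inj_on_def)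
  have QP: "Q \<subseteq> X \<times> Y \<union> Y \<times> X" unfolding Q_def using c by auto
  have w1: "?w p = 1" if "p \<in> Q" for p
    using that J N w_sc unfolding Q_def by auto
  have "real (card Q) = (\<Sum>p\<in>Q. ?w p)"
    using w1 by simp
  also have "\<dots> \<le> (\<Sum>p\<in>X \<times> Y \<union> Y \<times> X. ?w p)"
    using QP fX fY by (intro sum_mono2) (auto simp: w_nonneg)
  finally show ?thesis using cQ by simp
qed

lemma pairs_bound:
  assumes N: "N \<ge> 3" and fX: "finite X" and fY: "finite Y" and J: "J \<subseteq> {..<N}"
    and c: "\<forall>j\<in>J. (j \<in> X \<and> (j+1) mod N \<in> Y) \<or> (j \<in> Y \<and> (j+1) mod N \<in> X)"
  shows "2 * real (card J) \<le> cyc_E N X Y + cyc_E N Y X"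
proof -
  let ?w = "\<lambda>p. cyc_w N (fst p) (snd p)"
  have "0 \<le> (\<Sum>p\<in>(X \<times> Y) \<inter> (Y \<times> X). ?w p)" by (intro sum_nonneg) (simp add: w_nonneg)
  then have "(\<Sum>p\<in>X \<times> Y \<union> Y \<times> X. ?w p) \<le> (\<Sum>p\<in>X \<times> Y. ?w p) + (\<Sum>p\<in>Y \<times> X. ?w p)"
    using fX fY by (simp add: sum_Un)
  then show ?thesis using pairs_core[OF assms] E_cart[OF fX fY] E_cart[OF fY fX] by simp
qed

lemma pairs_same:
  assumes N: "N \<ge> 3" and fX: "finite X" and J: "J \<subseteq> {..<N}"
    and c: "\<forall>j\<in>J. j \<in> X \<and> (j+1) mod N \<in> X"
  shows "2 * real (card J) \<le> cyc_E N X X"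
  using pairs_core[OF N fX fX J] c E_cart[OF fX fX] by simp

lemma closed:
  fixes x N v :: nat
  assumes "x \<in> X" "x < N" "\<forall>u\<in>X. (u+1) mod N \<in> X" "v < N"
  shows "v \<in> X"
proof -
  have all: "(x + j) mod N \<in> X" for j :: nat
  proof (induction j)
    case 0 then show ?case using assms by simp
  next
    case (Suc j)
    have "(x + Suc j) mod N = ((x + j) mod N + 1) mod N" by (simp add: mod_Suc_eq)
    then show ?case using Suc assms(3) by simp
  qed
  have "(x + (v + N - x)) mod N = v" using assms(2,4) by simp
  then show ?thesis using all[of "v + N - x"] by simp
qed

lemma boundary:
  assumes N: "N \<ge> 3" and U: "U \<subseteq> {..<N}" "U \<noteq> {}" "U \<noteq> {..<N}"
  shows "cyc_E N U ({..<N} - U) \<ge> 2"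
proof -
  obtain u1 where u1: "u1 \<in> U" "(u1+1) mod N \<notin> U"
  proof -
    obtain x where "x \<in> U" using U by auto
    moreover obtain v where "v < N" "v \<notin> U" using U by auto
    ultimately show ?thesis using that closed[of x U N v] U(1) by blast
  qed
  obtain v1 where v1: "v1 \<in> {..<N} - U" "(v1+1) mod N \<notin> {..<N} - U"
  proof -
    obtain x where "x \<in> {..<N} - U" using U by auto
    moreover obtain v where "v \<in> U" using U by auto
    moreover have "v < N" using U calculation by auto
    ultimately show ?thesis using that closed[of x "{..<N} - U" N v] by blast
  qed
  have fU: "finite U" using U(1) by (meson finite_lessThan finite_subset)
  have Npos: "N > 0" using N by simp
  have "2 * real (card {u1, v1}) \<le> cyc_E N U ({..<N} - U) + cyc_E N ({..<N} - U) U"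
    using u1 v1 U(1) Npos by (intro pairs_bound[OF N fU]) auto
  moreover have "u1 \<noteq> v1" using u1 v1 by auto
  then have "card {u1, v1} = 2" by simp
  ultimately show ?thesis using E_sym[of N U "{..<N} - U"] by simp
qed

lemma odd_mono:
  fixes N :: nat and A B :: "nat set"
  assumes N: "N \<ge> 3" "odd N" and AB: "A \<union> B = {..<N}" "A \<inter> B = {}"
  shows "\<exists>j<N. (j \<in> A \<and> (j+1) mod N \<in> A) \<or> (j \<in> B \<and> (j+1) mod N \<in> B)"
proof (rule ccontr)
  assume neg: "\<not> ?thesis"
  have alt: "((j+1) mod N \<in> A \<longleftrightarrow> j \<notin> A)" if j: "j < N" for j
  proof -
    have s: "(j+1) mod N \<in> A \<union> B" using j AB(1) N(1) by simp
    have "j \<in> A \<union> B" using j AB(1) by simp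
    then show ?thesis using s AB(2) neg j by blast
  qed
  have par: "j < N \<Longrightarrow> (j \<in> A \<longleftrightarrow> (0 \<in> A \<longleftrightarrow> even j))" for j
  proof (induction j)
    case 0 then show ?case by simp
  next
    case (Suc j)
    then have "(j+1) mod N = Suc j" by simp
    then show ?case using Suc alt[of j] by simp
  qed
  have "(N - 1 + 1) mod N = 0" using N by simp
  then have "0 \<in> A \<longleftrightarrow> N - 1 \<notin> A" using alt[of "N-1"] N by simp
  moreover have "N - 1 \<in> A \<longleftrightarrow> 0 \<in> A" using par[of "N-1"] N by simp
  ultimately show False by blast
qed

lemma phi_ge:
  assumes N: "N \<ge> 3" and U: "U \<subseteq> {..<N}" "U \<noteq> {}" "U \<noteq> {..<N}"
  shows "cyc_phi N U \<ge> 1 / real (card U)"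
proof -
  have fU: "finite U" using U(1) by (meson finite_lessThan finite_subset)
  have c: "card U > 0" using fU U by (simp add: card_gt_0_iff)
  have "1 / real (card U) = 2 / (2 * real (card U))" by simp
  also have "\<dots> \<le> cyc_E N U ({..<N} - U) / (2 * real (card U))"
    using boundary[OF N U] c by (intro divide_right_mono) auto
  finally show ?thesis unfolding cyc_phi_def cyc_V_def using vol[OF N U(1)] by simp
qed

lemma phi_nonneg: "cyc_phi N S \<ge> 0"
  unfolding cyc_phi_def cyc_vol_def cyc_deg_def
  by (intro divide_nonneg_nonneg E_nonneg sum_nonneg) (simp add: w_nonneg)

lemma phibar_le:
  assumes N: "N \<ge> 3" and AB: "A \<subseteq> {..<N}" "B \<subseteq> {..<N}" "A \<inter> B = {}"
    and U: "A \<union> B \<noteq> {}" "A \<union> B \<noteq> {..<N}"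
  shows "cyc_phibar N A B \<le> 1 - 1 / real (card (A \<union> B))"
proof -
  have U1: "A \<union> B \<subseteq> {..<N}" using AB by auto
  have fU: "finite (A \<union> B)" using U1 by (meson finite_lessThan finite_subset)
  have c: "card (A \<union> B) > 0" using fU U by (simp add: card_gt_0_iff)
  have id: "2 * real (card (A \<union> B)) = cyc_E N A A + cyc_E N B B + 2 * cyc_E N A B
           + cyc_E N (A \<union> B) ({..<N} - (A \<union> B))"
    using identity[OF AB] vol[OF N U1] by simp
  have "2 * cyc_E N A B \<le> 2 * real (card (A \<union> B)) - 2"
    using id boundary[OF N U1 U] E_nonneg[of N A A] E_nonneg[of N B B] by linarith
  moreover have "cyc_phibar N A B = 2 * cyc_E N A B / (2 * real (card (A \<union> B)))"
    by (simp only: cyc_phibar_def vol[OF N U1])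
  ultimately have "cyc_phibar N A B \<le> (2 * real (card (A \<union> B)) - 2) / (2 * real (card (A \<union> B)))"
    by (metis divide_right_mono of_nat_0_le_iff mult_nonneg_nonneg zero_le_numeral)
  also have "\<dots> = 1 - 1 / real (card (A \<union> B))" using c by (simp add: field_simps)
  finally show ?thesis .
qed

lemma phibar_le1:
  assumes N: "N \<ge> 3" and AB: "A \<subseteq> {..<N}" "B \<subseteq> {..<N}" "A \<inter> B = {}"
    and U: "A \<union> B \<noteq> {}"
  shows "cyc_phibar N A B \<le> 1"
proof -
  have U1: "A \<union> B \<subseteq> {..<N}" using AB by auto
  have fU: "finite (A \<union> B)" using U1 by (meson finite_lessThan finite_subset)
  have c: "card (A \<union> B) > 0" using fU U by (simp add: card_gt_0_iff)
  have id: "2 * real (card (A \<union> B)) = cyc_E N A A + cyc_E N B B + 2 * cyc_E N A B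
           + cyc_E N (A \<union> B) ({..<N} - (A \<union> B))"
    using identity[OF AB] vol[OF N U1] by simp
  have "2 * cyc_E N A B \<le> 2 * real (card (A \<union> B))"
    using id E_nonneg[of N "A \<union> B" "{..<N} - (A \<union> B)"] E_nonneg[of N A A] E_nonneg[of N B B] by linarith
  then show ?thesis
    unfolding cyc_phibar_def using vol[OF N U1] c by simp
qed

lemma phibar_odd:
  assumes N: "N \<ge> 3" "odd N" and AB: "A \<subseteq> {..<N}" "B \<subseteq> {..<N}" "A \<inter> B = {}"
    and U: "A \<union> B = {..<N}"
  shows "cyc_phibar N A B \<le> (real N - 1) / real N"
proof -
  have fA: "finite A" and fB: "finite B" using AB(1,2) by (meson finite_lessThan finite_subset)+
  have id: "2 * real N = cyc_E N A A + cyc_E N B B + 2 * cyc_E N A B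
           + cyc_E N (A \<union> B) ({..<N} - (A \<union> B))"
    using identity[OF AB] vol[OF N(1), of "A \<union> B"] U by simp
  obtain j where j: "j < N" "(j \<in> A \<and> (j+1) mod N \<in> A) \<or> (j \<in> B \<and> (j+1) mod N \<in> B)"
    using odd_mono[OF N U AB(3)] by blast
  have "2 \<le> cyc_E N A A + cyc_E N B B"
  proof (cases "j \<in> A \<and> (j+1) mod N \<in> A")
    case True
    then have "2 * real (card {j}) \<le> cyc_E N A A"
      using j by (intro pairs_same[OF N(1) fA]) auto
    then show ?thesis using E_nonneg[of N B B] by simp
  next
    case False
    then have "2 * real (card {j}) \<le> cyc_E N B B"
      using j by (intro pairs_same[OF N(1) fB]) auto
    then show ?thesis using E_nonneg[of N A A] by simp
  qed
  then have "2 * cyc_E N A B \<le> 2 * real N - 2"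
    using id E_nonneg[of N "A \<union> B" "{..<N} - (A \<union> B)"] by linarith
  moreover have "cyc_phibar N A B = 2 * cyc_E N A B / (2 * real N)"
    unfolding cyc_phibar_def using vol[OF N(1), of "A \<union> B"] U by simp
  ultimately have "cyc_phibar N A B \<le> (2 * real N - 2) / (2 * real N)"
    by (metis divide_right_mono of_nat_0_le_iff mult_nonneg_nonneg zero_le_numeral)
  also have "\<dots> = (real N - 1) / real N" using N by (simp add: field_simps)
  finally show ?thesis .
qed

lemma arc:
  assumes N: "N \<ge> 3" and m: "m \<ge> 1" "a + m \<le> N"
  shows "cyc_phibar N {j\<in>{a..<a+m}. even j} {j\<in>{a..<a+m}. odd j} \<ge> 1 - 1 / real m"
    and "cyc_phi N {a..<a+m} \<le> 1 / real m"
proof -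
  define A where "A = {j\<in>{a..<a+m}. even j}"
  define B where "B = {j\<in>{a..<a+m}. odd j}"
  have AB: "A \<subseteq> {..<N}" "B \<subseteq> {..<N}" "A \<inter> B = {}" using m by (auto simp: A_def B_def)
  have U: "A \<union> B = {a..<a+m}" by (auto simp: A_def B_def)
  have U1: "{a..<a+m} \<subseteq> {..<N}" using m by auto
  have fA: "finite A" and fB: "finite B" by (auto simp: A_def B_def)
  have J: "{a..<a+m-1} \<subseteq> {..<N}" using m by auto
  have "2 * real (card {a..<a+m-1}) \<le> cyc_E N A B + cyc_E N B A"
  proof (rule pairs_bound[OF N fA fB J], rule ballI)
    fix j assume j: "j \<in> {a..<a+m-1}"
    then have "(j+1) mod N = j + 1" using m by auto
    then show "(j \<in> A \<and> (j+1) mod N \<in> B) \<or> (j \<in> B \<and> (j+1) mod N \<in> A)"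
      using j by (auto simp: A_def B_def)
  qed
  then have EAB: "2 * (real m - 1) \<le> 2 * cyc_E N A B"
    using E_sym[of N B A] m by (simp add: of_nat_diff)
  have vU: "cyc_vol N (A \<union> B) = 2 * real m" using vol[OF N U1] U by simp
  have mp: "real m > 0" using m by simp
  have "1 - 1 / real m = 2 * (real m - 1) / (2 * real m)" using mp by (simp add: field_simps)
  also have "\<dots> \<le> 2 * cyc_E N A B / (2 * real m)"
    using EAB mp by (intro divide_right_mono) auto
  also have "\<dots> = cyc_phibar N A B" unfolding cyc_phibar_def vU ..
  finally show "cyc_phibar N {j\<in>{a..<a+m}. even j} {j\<in>{a..<a+m}. odd j} \<ge> 1 - 1 / real m"
    by (simp add: A_def B_def)
  have id: "2 * real m = cyc_E N A A + cyc_E N B B + 2 * cyc_E N A B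
           + cyc_E N (A \<union> B) ({..<N} - (A \<union> B))"
    using identity[OF AB] vU by simp
  have "cyc_E N {a..<a+m} ({..<N} - {a..<a+m}) \<le> 2"
    using id[unfolded U] EAB E_nonneg[of N A A] E_nonneg[of N B B] by argo
  then have "cyc_E N {a..<a+m} ({..<N} - {a..<a+m}) / (2 * real m) \<le> 2 / (2 * real m)"
    using mp by (intro divide_right_mono) auto
  then show "cyc_phi N {a..<a+m} \<le> 1 / real m"
    unfolding cyc_phi_def cyc_V_def using vU U by simp
qed

lemma even_full:
  assumes N: "N \<ge> 3" "even N"
  shows "cyc_phibar N {j\<in>{..<N}. even j} {j\<in>{..<N}. odd j} \<ge> 1"
proof -
  define A where "A = {j\<in>{..<N}. even j}"
  define B where "B = {j\<in>{..<N}. odd j}"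
  have AB: "A \<subseteq> {..<N}" "B \<subseteq> {..<N}" "A \<inter> B = {}" by (auto simp: A_def B_def)
  have U: "A \<union> B = {..<N}" by (auto simp: A_def B_def)
  have fA: "finite A" and fB: "finite B" by (auto simp: A_def B_def)
  have "2 * real (card {..<N}) \<le> cyc_E N A B + cyc_E N B A"
  proof (rule pairs_bound[OF N(1) fA fB], simp, rule ballI)
    fix j assume j: "j \<in> {..<N}"
    have "(j+1) mod N = (if j + 1 = N then 0 else j + 1)" using j by auto
    then show "(j \<in> A \<and> (j+1) mod N \<in> B) \<or> (j \<in> B \<and> (j+1) mod N \<in> A)"
      using j N by (auto simp: A_def B_def)
  qed
  then have EAB: "2 * real N \<le> 2 * cyc_E N A B"
    using E_sym[of N B A] by simp
  have vU: "cyc_vol N (A \<union> B) = 2 * real N" using vol[OF N(1), of "A \<union> B"] U by simp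
  have "cyc_phibar N A B = 2 * cyc_E N A B / (2 * real N)" unfolding cyc_phibar_def vU ..
  moreover have "1 \<le> 2 * cyc_E N A B / (2 * real N)" using EAB N by (simp add: le_divide_eq)
  ultimately have "1 \<le> cyc_phibar N A B" by simp
  then show ?thesis by (simp add: A_def B_def)
qed

lemma small:
  assumes k: "k \<ge> (1::nat)" and S: "\<forall>i<k. S i \<subseteq> {..<N}"
    and D: "\<forall>i<k. \<forall>j<k. i \<noteq> j \<longrightarrow> S i \<inter> S j = {}"
  shows "\<exists>i<k. card (S i) \<le> N div k"
proof (rule ccontr)
  assume "\<not> ?thesis"
  then have big: "\<forall>i<k. N div k + 1 \<le> card (S i)" by auto
  have fin: "\<forall>i\<in>{..<k}. finite (S i)" using S by (meson finite_lessThan finite_subset lessThan_iff)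
  have "card (\<Union>(S ` {..<k})) = (\<Sum>i\<in>{..<k}. card (S i))"
    using fin D by (intro card_UN_disjoint) auto
  moreover have "(\<Sum>i\<in>{..<k}. card (S i)) \<ge> (\<Sum>i\<in>{..<k}. N div k + 1)"
    using big by (intro sum_mono) auto
  moreover have "card (\<Union>(S ` {..<k})) \<le> N"
    using S card_mono[of "{..<N}" "\<Union>(S ` {..<k})"] by auto
  moreover have "N < k * (N div k + 1)"
  proof -
    have e: "k * (N div k) + N mod k = N" by (rule mult_div_mod_eq)
    moreover have "N mod k < k" using k by simp
    ultimately show ?thesis unfolding distrib_left by linarith
  qed
  ultimately show False by simp
qed

lemma arcs_disj:
  fixes m :: nat
  assumes "i \<noteq> j" shows "{i*m..<i*m+m} \<inter> {j*m..<j*m+m} = {}"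
proof (cases "i < j")
  case True
  then have "i*m+m \<le> j*m" using mult_le_mono1[of "Suc i" j m] by simp
  then show ?thesis by auto
next
  case False
  then have "j < i" using assms by simp
  then have "j*m+m \<le> i*m" using mult_le_mono1[of "Suc j" i m] by simp
  then show ?thesis by auto
qed

lemma arcs_sub:
  fixes m k N :: nat
  assumes "i < k" "m = N div k" shows "i*m + m \<le> N"
proof -
  have "i*m+m \<le> k*m" using mult_le_mono1[of "Suc i" k m] assms by simp
  also have "k*m \<le> N" using assms div_times_less_eq_dividend[of N k] by (simp add: mult.commute)
  finally show ?thesis .
qed

lemma not_all:
  assumes "k \<ge> (2::nat)" "i0 < k" "\<forall>i<k. S i \<noteq> {} \<and> S i \<subseteq> {..<N}"
    "\<forall>i<k. \<forall>j<k. i \<noteq> j \<longrightarrow> S i \<inter> S j = {}"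
  shows "S i0 \<noteq> {..<N}"
proof
  assume eq: "S i0 = {..<N}"
  define j where "j = (if i0 = 0 then 1 else 0::nat)"
  have j: "j < k" "j \<noteq> i0" using assms by (auto simp: j_def)
  then have "S j \<inter> S i0 = {}" "S j \<noteq> {}" "S j \<subseteq> {..<N}" using assms by auto
  then show False using eq by auto
qed

lemma lt1: "{..<(1::nat)} = {0}" by auto

lemma h1: assumes N: "N \<ge> 3" shows "cyc_h N 1 = 0"
  unfolding cyc_h_def
proof (rule cInf_eq_minimum)
  have z: "cyc_phi N {..<N} = 0" unfolding cyc_phi_def cyc_V_def cyc_E_def by simp
  let ?S = "\<lambda>_::nat. {..<N::nat}"
  have "0 \<in> {..<N}" using N by simp
  then have ne: "{..<N} \<noteq> {}" by blast
  have P: "(\<forall>i<(1::nat). ?S i \<noteq> {} \<and> ?S i \<subseteq> cyc_V N) \<and> (\<forall>i<(1::nat). \<forall>j<(1::nat). i \<noteq> j \<longrightarrow> ?S i \<inter> ?S j = {})"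
    using ne by (simp add: cyc_V_def)
  have M: "Max ((\<lambda>i. cyc_phi N (?S i)) ` {..<(1::nat)}) = 0" unfolding lt1 using z by simp
  show "0 \<in> {Max ((\<lambda>i. cyc_phi N (S i)) ` {..<(1::nat)}) | S.
      (\<forall>i<(1::nat). S i \<noteq> {} \<and> S i \<subseteq> cyc_V N) \<and>
      (\<forall>i<(1::nat). \<forall>j<(1::nat). i \<noteq> j \<longrightarrow> S i \<inter> S j = {})}"
    by (rule CollectI, rule exI[where x="?S"], rule conjI[OF M[symmetric] P])
next
  fix x assume "x \<in> {Max ((\<lambda>i. cyc_phi N (S i)) ` {..<(1::nat)}) | S.
      (\<forall>i<(1::nat). S i \<noteq> {} \<and> S i \<subseteq> cyc_V N) \<and>
      (\<forall>i<(1::nat). \<forall>j<(1::nat). i \<noteq> j \<longrightarrow> S i \<inter> S j = {})}"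
  then obtain S where "x = Max ((\<lambda>i. cyc_phi N (S i)) ` {..<(1::nat)})"
    by (elim CollectE exE conjE) (rule that, assumption+)
  then show "0 \<le> x" using phi_nonneg unfolding lt1 by simp
qed

lemma hbar1: assumes N: "N \<ge> 3"
  shows "cyc_hbar N 1 = (if odd N then (real N - 1) / real N else 1)"
  unfolding cyc_hbar_def
proof (rule cSup_eq_maximum)
  let ?v = "(if odd N then (real N - 1) / real N else 1)"
  show "?v \<in> {Min ((\<lambda>i. cyc_phibar N (A i) (B i)) ` {..<(1::nat)}) | A B.
      (\<forall>i<(1::nat). A i \<subseteq> cyc_V N \<and> B i \<subseteq> cyc_V N \<and> A i \<union> B i \<noteq> {} \<and> A i \<inter> B i = {}) \<and>
      (\<forall>i<(1::nat). \<forall>j<(1::nat). i \<noteq> j \<longrightarrow> (A i \<union> B i) \<inter> (A j \<union> B j) = {})}"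
  proof (cases "odd N")
    case True
    define A where "A = {j\<in>{0..<0+N}. even j}"
    define B where "B = {j\<in>{0..<0+N}. odd j}"
    have AB: "A \<subseteq> {..<N}" "B \<subseteq> {..<N}" "A \<inter> B = {}" "A \<union> B = {..<N}"
      by (auto simp: A_def B_def)
    have "cyc_phibar N A B \<ge> 1 - 1 / real N" unfolding A_def B_def using N by (intro arc(1)) auto
    moreover have "cyc_phibar N A B \<le> (real N - 1) / real N" using phibar_odd[OF N True AB] .
    moreover have "1 - 1 / real N = (real N - 1) / real N" using N by (simp add: field_simps)
    ultimately have "cyc_phibar N A B = ?v" using True by simp
    then have m: "Min ((\<lambda>i. cyc_phibar N ((\<lambda>_::nat. A) i) ((\<lambda>_::nat. B) i)) ` {..<(1::nat)}) = ?v"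
      unfolding lt1 by simp
    have P: "(\<forall>i<(1::nat). (\<lambda>_::nat. A) i \<subseteq> cyc_V N \<and> (\<lambda>_::nat. B) i \<subseteq> cyc_V N \<and> (\<lambda>_::nat. A) i \<union> (\<lambda>_::nat. B) i \<noteq> {} \<and> (\<lambda>_::nat. A) i \<inter> (\<lambda>_::nat. B) i = {}) \<and>
      (\<forall>i<(1::nat). \<forall>j<(1::nat). i \<noteq> j \<longrightarrow> ((\<lambda>_::nat. A) i \<union> (\<lambda>_::nat. B) i) \<inter> ((\<lambda>_::nat. A) j \<union> (\<lambda>_::nat. B) j) = {})"
      using AB N by (simp add: cyc_V_def lessThan_empty_iff)
    show ?thesis
      by (rule CollectI, rule exI[where x="\<lambda>_::nat. A"], rule exI[where x="\<lambda>_::nat. B"], rule conjI[OF m[symmetric] P])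
  next
    case False
    define A where "A = {j\<in>{..<N}. even j}"
    define B where "B = {j\<in>{..<N}. odd j}"
    have AB: "A \<subseteq> {..<N}" "B \<subseteq> {..<N}" "A \<inter> B = {}" "A \<union> B = {..<N}"
      by (auto simp: A_def B_def)
    have "cyc_phibar N A B \<ge> 1" unfolding A_def B_def using N False by (intro even_full) auto
    moreover have "cyc_phibar N A B \<le> 1"
    proof -
      have "0 \<in> {..<N}" using N by simp
      then have "A \<union> B \<noteq> {}" unfolding AB(4) by blast
      then show ?thesis using phibar_le1[OF N AB(1-3)] by blast
    qed
    ultimately have "cyc_phibar N A B = ?v" using False by simp
    then have m: "Min ((\<lambda>i. cyc_phibar N ((\<lambda>_::nat. A) i) ((\<lambda>_::nat. B) i)) ` {..<(1::nat)}) = ?v"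
      unfolding lt1 by simp
    have P: "(\<forall>i<(1::nat). (\<lambda>_::nat. A) i \<subseteq> cyc_V N \<and> (\<lambda>_::nat. B) i \<subseteq> cyc_V N \<and> (\<lambda>_::nat. A) i \<union> (\<lambda>_::nat. B) i \<noteq> {} \<and> (\<lambda>_::nat. A) i \<inter> (\<lambda>_::nat. B) i = {}) \<and>
      (\<forall>i<(1::nat). \<forall>j<(1::nat). i \<noteq> j \<longrightarrow> ((\<lambda>_::nat. A) i \<union> (\<lambda>_::nat. B) i) \<inter> ((\<lambda>_::nat. A) j \<union> (\<lambda>_::nat. B) j) = {})"
      using AB N by (simp add: cyc_V_def lessThan_empty_iff)
    show ?thesis
      by (rule CollectI, rule exI[where x="\<lambda>_::nat. A"], rule exI[where x="\<lambda>_::nat. B"], rule conjI[OF m[symmetric] P])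
  qed
next
  fix x assume "x \<in> {Min ((\<lambda>i. cyc_phibar N (A i) (B i)) ` {..<(1::nat)}) | A B.
      (\<forall>i<(1::nat). A i \<subseteq> cyc_V N \<and> B i \<subseteq> cyc_V N \<and> A i \<union> B i \<noteq> {} \<and> A i \<inter> B i = {}) \<and>
      (\<forall>i<(1::nat). \<forall>j<(1::nat). i \<noteq> j \<longrightarrow> (A i \<union> B i) \<inter> (A j \<union> B j) = {})}"
  then obtain A B where x0: "x = Min ((\<lambda>i. cyc_phibar N (A i) (B i)) ` {..<(1::nat)})"
    and C: "\<forall>i<(1::nat). A i \<subseteq> cyc_V N \<and> B i \<subseteq> cyc_V N \<and> A i \<union> B i \<noteq> {} \<and> A i \<inter> B i = {}"
    by (elim CollectE exE conjE) (rule that, assumption+)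
  have x: "x = cyc_phibar N (A 0) (B 0)" using x0 unfolding lt1 by simp
  have C0: "A 0 \<subseteq> cyc_V N \<and> B 0 \<subseteq> cyc_V N \<and> A 0 \<union> B 0 \<noteq> {} \<and> A 0 \<inter> B 0 = {}"
    using C by blast
  then have AB: "A 0 \<subseteq> {..<N}" "B 0 \<subseteq> {..<N}" "A 0 \<inter> B 0 = {}" and ne: "A 0 \<union> B 0 \<noteq> {}"
    unfolding cyc_V_def by blast+
  show "x \<le> (if odd N then (real N - 1) / real N else 1)"
  proof (cases "odd N")
    case False then show ?thesis using phibar_le1[OF N AB ne] x by simp
  next
    case True
    show ?thesis
    proof (cases "A 0 \<union> B 0 = {..<N}")
      case eq: True
      then show ?thesis using phibar_odd[OF N True AB eq] x True by simp
    next
      case neq: False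
      have sub: "A 0 \<union> B 0 \<subseteq> {..<N}" using AB by blast
      have fin: "finite (A 0 \<union> B 0)" using sub by (meson finite_lessThan finite_subset)
      have c1: "card (A 0 \<union> B 0) \<le> N" using card_mono[OF finite_lessThan sub] by simp
      have c2: "card (A 0 \<union> B 0) > 0" using fin ne by (simp add: card_gt_0_iff)
      have "1 / real N \<le> 1 / real (card (A 0 \<union> B 0))"
        using c1 c2 by (simp add: frac_le)
      moreover have "1 - 1 / real N = (real N - 1) / real N" using N by (simp add: field_simps)
      ultimately show ?thesis using phibar_le[OF N AB ne neq] x True by simp
    qed
  qed
qed

lemma hk: assumes N: "N \<ge> 3" and k: "2 \<le> k" "k \<le> N"
  shows "cyc_h N k = 1 / real (N div k)"
  unfolding cyc_h_def
proof (rule cInf_eq_minimum)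
  define m where "m = N div k"
  have m1: "m \<ge> 1" using div_le_mono[OF k(2), of k] k unfolding m_def by simp
  have mN: "m < N"
  proof -
    have "m * k \<le> N" unfolding m_def by simp
    moreover have "m * 2 \<le> m * k" using k by simp
    ultimately show ?thesis using m1 by linarith
  qed
  define S where "S = (\<lambda>i. {i*m..<i*m+m})"
  have Ssub: "S i \<subseteq> {..<N}" if "i < k" for i
  proof
    fix x assume "x \<in> S i"
    then have "x < i*m+m" by (simp add: S_def)
    then show "x \<in> {..<N}" using arcs_sub[OF that m_def] by simp
  qed
  have Sne: "S i \<noteq> {}" for i
  proof -
    have "i*m \<in> S i" using m1 by (simp add: S_def)
    then show ?thesis by blast
  qed
  have Sc: "card (S i) = m" for i by (simp add: S_def)
  have SV: "S i \<noteq> {..<N}" for i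
  proof
    assume "S i = {..<N}"
    then have "card (S i) = N" by simp
    then show False using Sc[of i] mN by simp
  qed
  have phiS: "cyc_phi N (S i) = 1 / real m" if "i < k" for i
  proof -
    have "cyc_phi N (S i) \<le> 1 / real m" unfolding S_def using arc(2)[OF N m1 arcs_sub[OF that m_def]] .
    moreover have "cyc_phi N (S i) \<ge> 1 / real m" using phi_ge[OF N Ssub[OF that] Sne SV] Sc by simp
    ultimately show ?thesis by simp
  qed
  have img: "(\<lambda>i. cyc_phi N (S i)) ` {..<k} = {1 / real m}"
  proof -
    have "(\<lambda>i. cyc_phi N (S i)) ` {..<k} = (\<lambda>i. 1 / real m) ` {..<k}"
      by (rule image_cong[OF refl]) (simp add: phiS)
    moreover have "{..<k} \<noteq> {}"
    proof -
      have "0 \<in> {..<k}" using k by simp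
      then show ?thesis by blast
    qed
    ultimately show ?thesis by (simp add: image_constant_conv)
  qed
  show "1 / real (N div k) \<in> {Max ((\<lambda>i. cyc_phi N (S i)) ` {..<k}) | S.
      (\<forall>i<k. S i \<noteq> {} \<and> S i \<subseteq> cyc_V N) \<and>
      (\<forall>i<k. \<forall>j<k. i \<noteq> j \<longrightarrow> S i \<inter> S j = {})}"
  proof -
    have P: "(\<forall>i<k. S i \<noteq> {} \<and> S i \<subseteq> cyc_V N) \<and> (\<forall>i<k. \<forall>j<k. i \<noteq> j \<longrightarrow> S i \<inter> S j = {})"
      using Sne Ssub arcs_disj[of _ _ m] unfolding cyc_V_def S_def by blast
    have M: "Max ((\<lambda>i. cyc_phi N (S i)) ` {..<k}) = 1 / real (N div k)" using img m_def by simp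
    show ?thesis by (rule CollectI, rule exI[where x="S"], rule conjI[OF M[symmetric] P])
  qed
next
  fix x assume "x \<in> {Max ((\<lambda>i. cyc_phi N (S i)) ` {..<k}) | S.
      (\<forall>i<k. S i \<noteq> {} \<and> S i \<subseteq> cyc_V N) \<and>
      (\<forall>i<k. \<forall>j<k. i \<noteq> j \<longrightarrow> S i \<inter> S j = {})}"
  then obtain S where x: "x = Max ((\<lambda>i. cyc_phi N (S i)) ` {..<k})"
    and S: "\<forall>i<k. S i \<noteq> {} \<and> S i \<subseteq> cyc_V N" and D: "\<forall>i<k. \<forall>j<k. i \<noteq> j \<longrightarrow> S i \<inter> S j = {}"
    by (elim CollectE exE conjE) (rule that, assumption+)
  note S = S[unfolded cyc_V_def]
  obtain i0 where i0: "i0 < k" "card (S i0) \<le> N div k" using small[of k S N] S D k by auto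
  have V: "S i0 \<noteq> {..<N}" using not_all[OF k(1) i0(1) S D] .
  have fin: "finite (S i0)" using S i0 by (meson finite_lessThan finite_subset)
  have c: "card (S i0) > 0" using fin S i0 by (simp add: card_gt_0_iff)
  have "1 / real (N div k) \<le> 1 / real (card (S i0))"
    using c i0 by (intro divide_left_mono) auto
  also have "\<dots> \<le> cyc_phi N (S i0)" using phi_ge[OF N] S i0 V by auto
  also have "\<dots> \<le> x" unfolding x using i0 by (intro Max_ge) auto
  finally show "1 / real (N div k) \<le> x" .
qed

lemma hbark: assumes N: "N \<ge> 3" and k: "2 \<le> k" "k \<le> N"
  shows "cyc_hbar N k = 1 - 1 / real (N div k)"
  unfolding cyc_hbar_def
proof (rule cSup_eq_maximum)
  define m where "m = N div k"
  have m1: "m \<ge> 1" using div_le_mono[OF k(2), of k] k unfolding m_def by simp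
  have mN: "m < N"
  proof -
    have "m * k \<le> N" unfolding m_def by simp
    moreover have "m * 2 \<le> m * k" using k by simp
    ultimately show ?thesis using m1 by linarith
  qed
  define A where "A = (\<lambda>i. {j\<in>{i*m..<i*m+m}. even j})"
  define B where "B = (\<lambda>i. {j\<in>{i*m..<i*m+m}. odd j})"
  have U: "A i \<union> B i = {i*m..<i*m+m}" for i by (auto simp: A_def B_def)
  have ABd: "A i \<inter> B i = {}" for i by (auto simp: A_def B_def)
  have Usub': "A i \<union> B i \<subseteq> {..<N}" if "i < k" for i
  proof
    fix x assume "x \<in> A i \<union> B i"
    then have "x < i*m+m" by (simp add: U)
    then show "x \<in> {..<N}" using arcs_sub[OF that m_def] by simp
  qed
  have Usub: "A i \<subseteq> {..<N}" "B i \<subseteq> {..<N}" if "i < k" for i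
    using Usub'[OF that] by blast+
  have Une: "A i \<union> B i \<noteq> {}" for i
  proof -
    have "i*m \<in> A i \<union> B i" using m1 by (simp add: U)
    then show ?thesis by blast
  qed
  have Uc: "card (A i \<union> B i) = m" for i by (simp add: U)
  have UV: "A i \<union> B i \<noteq> {..<N}" for i
  proof
    assume "A i \<union> B i = {..<N}"
    then have "card (A i \<union> B i) = N" by simp
    then show False using Uc[of i] mN by simp
  qed
  have pb: "cyc_phibar N (A i) (B i) = 1 - 1 / real m" if "i < k" for i
  proof -
    have "cyc_phibar N (A i) (B i) \<ge> 1 - 1 / real m"
      unfolding A_def B_def using arc(1)[OF N m1 arcs_sub[OF that m_def]] .
    moreover have "cyc_phibar N (A i) (B i) \<le> 1 - 1 / real m"
      using phibar_le[OF N Usub[OF that] ABd Une UV] Uc by simp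
    ultimately show ?thesis by simp
  qed
  have img: "(\<lambda>i. cyc_phibar N (A i) (B i)) ` {..<k} = {1 - 1 / real m}"
  proof -
    have "(\<lambda>i. cyc_phibar N (A i) (B i)) ` {..<k} = (\<lambda>i. 1 - 1 / real m) ` {..<k}"
      by (rule image_cong[OF refl]) (simp add: pb)
    moreover have "{..<k} \<noteq> {}"
    proof -
      have "0 \<in> {..<k}" using k by simp
      then show ?thesis by blast
    qed
    ultimately show ?thesis by (simp add: image_constant_conv)
  qed
  show "1 - 1 / real (N div k) \<in> {Min ((\<lambda>i. cyc_phibar N (A i) (B i)) ` {..<k}) | A B.
      (\<forall>i<k. A i \<subseteq> cyc_V N \<and> B i \<subseteq> cyc_V N \<and> A i \<union> B i \<noteq> {} \<and> A i \<inter> B i = {}) \<and>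
      (\<forall>i<k. \<forall>j<k. i \<noteq> j \<longrightarrow> (A i \<union> B i) \<inter> (A j \<union> B j) = {})}"
  proof -
    have P: "(\<forall>i<k. A i \<subseteq> cyc_V N \<and> B i \<subseteq> cyc_V N \<and> A i \<union> B i \<noteq> {} \<and> A i \<inter> B i = {}) \<and>
      (\<forall>i<k. \<forall>j<k. i \<noteq> j \<longrightarrow> (A i \<union> B i) \<inter> (A j \<union> B j) = {})"
      using Une Usub ABd arcs_disj[of _ _ m] unfolding cyc_V_def U by blast
    have M: "Min ((\<lambda>i. cyc_phibar N (A i) (B i)) ` {..<k}) = 1 - 1 / real (N div k)" using img m_def by simp
    show ?thesis by (rule CollectI, rule exI[where x="A"], rule exI[where x="B"], rule conjI[OF M[symmetric] P])
  qed
next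
  fix x assume "x \<in> {Min ((\<lambda>i. cyc_phibar N (A i) (B i)) ` {..<k}) | A B.
      (\<forall>i<k. A i \<subseteq> cyc_V N \<and> B i \<subseteq> cyc_V N \<and> A i \<union> B i \<noteq> {} \<and> A i \<inter> B i = {}) \<and>
      (\<forall>i<k. \<forall>j<k. i \<noteq> j \<longrightarrow> (A i \<union> B i) \<inter> (A j \<union> B j) = {})}"
  then obtain A B where x: "x = Min ((\<lambda>i. cyc_phibar N (A i) (B i)) ` {..<k})"
    and AB: "\<forall>i<k. A i \<subseteq> cyc_V N \<and> B i \<subseteq> cyc_V N \<and> A i \<union> B i \<noteq> {} \<and> A i \<inter> B i = {}"
    and D: "\<forall>i<k. \<forall>j<k. i \<noteq> j \<longrightarrow> (A i \<union> B i) \<inter> (A j \<union> B j) = {}"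
    by (elim CollectE exE conjE) (rule that, assumption+)
  note AB = AB[unfolded cyc_V_def]
  define S where "S = (\<lambda>i. A i \<union> B i)"
  have S: "\<forall>i<k. S i \<noteq> {} \<and> S i \<subseteq> {..<N}" using AB by (auto simp: S_def)
  have D': "\<forall>i<k. \<forall>j<k. i \<noteq> j \<longrightarrow> S i \<inter> S j = {}" using D by (simp add: S_def)
  obtain i0 where i0: "i0 < k" "card (S i0) \<le> N div k" using small[of k S N] S D' k by auto
  have V: "S i0 \<noteq> {..<N}" using not_all[OF k(1) i0(1) S D'] .
  have fin: "finite (S i0)" using S i0 by (meson finite_lessThan finite_subset)
  have c: "card (S i0) > 0" using fin S i0 by (simp add: card_gt_0_iff)
  have "x \<le> cyc_phibar N (A i0) (B i0)" unfolding x using i0 by (intro Min_le) auto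
  also have "\<dots> \<le> 1 - 1 / real (card (S i0))"
    using phibar_le[OF N] AB i0 V unfolding S_def by auto
  also have "\<dots> \<le> 1 - 1 / real (N div k)"
    using c i0 by (simp add: frac_le)
  finally show "x \<le> 1 - 1 / real (N div k)" .
qed

theorem proposition7p3:
  fixes N :: nat
  assumes "N \<ge> 3"
  shows "cyc_h N 1 = 0
    \<and> cyc_hbar N 1 = (if odd N then (real N - 1) / real N else 1)
    \<and> (\<forall>k. 2 \<le> k \<and> k \<le> N \<longrightarrow>
          cyc_h N k = 1 - cyc_hbar N k \<and> cyc_h N k = 1 / real (N div k))"
  using h1[OF assms] hbar1[OF assms] hk[OF assms] hbark[OF assms] by simp

end
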